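(* Suppose $B:\mathcal{F}\otimes\mathcal{F}\to\mathbb{Z}$ is a bilinear form such that: (1) if $w_0\in\mathcal{M}_{n_0}^{e_0}$, $w_1\in\mathcal{M}_{n_1}^{e_1}$ with $(n_0,e_0)\ne(n_1,e_1)$ then $B(w_0,w_1)=0$; (2) for all words $w_0,w_1$: $B(a_{x,i}w_0,w_1)=B(w_0,a^*_{x,i}w_1)$ for $0\le i\le n_x(w_0)$, and $B(w_0,a_{y,i}w_1)=B(a^*_{y,i}w_0,w_1)$ for $0\le i\le n_y(w_1)$ (with $B(0,\cdot)=B(\cdot,0)=0$ when a terminal annihilation gives $0$); (3) $B(1,1)=1$. Then $B=\langle\cdot|\cdot\rangle$.
   Context: $\mathcal{M}$ is the free monoid of words in $x,y$ (empty word $1$), $\mathcal{F}$ its $\mathbb{Z}$-span; $\mathcal{M}_n^e$ is the set of words with $n_x$ $x$'s and $n_y$ $y$'s where $n=n_x+n_y$, $e=n_y-n_x$; $n_s(w)$ is the number of letters $s$ in $w$. Operators on a word $w$ (extended linearly): $a_{s,0}w$ deletes the initial letter if it is $s$, else $0$; $a_{s,i}w$ ($1\le i\le n_s(w)$) deletes the $i$-th $s$; $a_{s,n_s+1}w$ deletes the final letter if it is $s$, else $0$; $a^*_{s,0}w$ prepends $s$; $a^*_{s,i}w$ ($1\le i\le n_s(w)$) replaces the $i$-th $s$ by $ss$; $a^*_{s,n_s+1}w$ appends $s$. $\langle w_0|w_1\rangle=1$ if $w_0,w_1$ have the same degrees and for each $i$ the $i$-th $x$ of $w_0$ is at a position $\le$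 that of the $i$-th $x$ of $w_1$; otherwise $0$; extended bilinearly. *)

theory Defs
  imports Main
begin

text \<open>Letters of the alphabet; words (elements of the free monoid M) are lists of letters,
  the empty list being the empty word 1. A bilinear form on the Z-span F of M is determined
  by (and identified with) its values on pairs of basis words: B :: word => word => int.\<close>

datatype letter = X | Y

type_synonym word = "letter list"

definition ns :: "letter \<Rightarrow> word \<Rightarrow> nat" where
  "ns s w = count_list w s"

definition deg_n :: "word \<Rightarrow> nat" where "deg_n w = ns X w + ns Y w"
definition deg_e :: "word \<Rightarrow> int" where "deg_e w = int (ns Y w) - int (ns X w)"

definition spos :: "letter \<Rightarrow> word \<Rightarrow> nat list" where
  "spos s w = filter (\<lambda>j. w ! j = s) [0..<length w]"

text \<open>Annihilation operator a_{s,i}; result None stands for the zero vector.\<close>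
definition ann :: "letter \<Rightarrow> nat \<Rightarrow> word \<Rightarrow> word option" where
  "ann s i w =
    (if i = 0 then (if w \<noteq> [] \<and> hd w = s then Some (tl w) else None)
     else if i \<le> ns s w then
       (let p = spos s w ! (i - 1) in Some (take p w @ drop (Suc p) w))
     else if i = ns s w + 1 then (if w \<noteq> [] \<and> last w = s then Some (butlast w) else None)
     else None)"

definition cre :: "letter \<Rightarrow> nat \<Rightarrow> word \<Rightarrow> word option" where
  "cre s i w =
    (if i = 0 then Some (s # w)
     else if i \<le> ns s w then
       (let p = spos s w ! (i - 1) in Some (take p w @ s # drop p w))
     else if i = ns s w + 1 then Some (w @ [s])
     else None)"

text \<open>Bilinear extension to arguments that may be zero (None).\<close>
definition liftB :: "(word \<Rightarrow> word \<Rightarrow> int) \<Rightarrow> word option \<Rightarrow> word option \<Rightarrow> int" where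
  "liftB B u v = (case (u, v) of (Some a, Some b) \<Rightarrow> B a b | _ \<Rightarrow> 0)"

definition pairing :: "word \<Rightarrow> word \<Rightarrow> int" where
  "pairing w0 w1 =
    (if ns X w0 = ns X w1 \<and> ns Y w0 = ns Y w1 \<and>
        list_all2 (\<le>) (spos X w0) (spos X w1) then 1 else 0)"

end

theory Submission
  imports Defs
begin

lemma spos_append: "spos s (xs @ ys) = spos s xs @ map (\<lambda>j. j + length xs) (spos s ys)"
proof -
  have u: "[0..<length xs + length ys] = [0..<length xs] @ map (\<lambda>j. j + length xs) [0..<length ys]"
    by (simp only: map_add_upt upt_add_eq_append[OF le0] add.commute)
  have a: "filter (\<lambda>j. (xs @ ys) ! j = s) [0..<length xs] = filter (\<lambda>j. xs ! j = s) [0..<length xs]"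
    by (rule filter_cong) (auto simp: nth_append)
  have b: "filter (\<lambda>j. (xs @ ys) ! j = s) (map (\<lambda>j. j + length xs) [0..<length ys])
      = map (\<lambda>j. j + length xs) (filter (\<lambda>j. ys ! j = s) [0..<length ys])"
    unfolding filter_map comp_def by (simp add: nth_append)
  show ?thesis unfolding spos_def using u a b by simp
qed

lemma spos_Nil[simp]: "spos s [] = []" by (simp add: spos_def)
lemma spos_single: "spos s [c] = (if c = s then [0] else [])" by (simp add: spos_def)

lemma length_spos: "length (spos s w) = ns s w"
  by (induction w rule: rev_induct) (auto simp: spos_append spos_single ns_def)

lemma spos_Cons: "spos s (c # w) = (if c = s then 0 # map Suc (spos s w) else map Suc (spos s w))"
  using spos_append[of s "[c]" w] by (simp add: spos_single)

lemma spos_snoc: "spos s (w @ [c]) = (if c = s then spos s w @ [length w] else spos s w)"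
  by (simp add: spos_append spos_single)

lemma spos_less: "j \<in> set (spos s w) \<Longrightarrow> j < length w" by (simp add: spos_def)
lemma spos_sorted: "sorted_wrt (<) (spos s w)" unfolding spos_def by (simp add: sorted_wrt_filter)

lemma spos_nothere: "s \<notin> set b \<Longrightarrow> spos s b = []"
  unfolding spos_def by (auto simp: filter_empty_conv in_set_conv_nth)

lemma spos_all: "set b \<subseteq> {s} \<Longrightarrow> spos s b = [0..<length b]"
  unfolding spos_def by (rule filter_True) (auto simp: subset_iff)

lemma ns_Cons[simp]: "ns s (c # w) = (if c = s then Suc (ns s w) else ns s w)" by (simp add: ns_def)
lemma ns_append[simp]: "ns s (xs @ ys) = ns s xs + ns s ys" by (simp add: ns_def)
lemma ns_Nil[simp]: "ns s [] = 0" by (simp add: ns_def)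

lemma len_ns: "length w = ns X w + ns Y w"
  by (induction w) (auto, case_tac a, auto)

lemma ns_notin: "s \<notin> set b \<Longrightarrow> ns s b = 0" by (simp add: ns_def)

lemma ann0: "ann s 0 (c # u) = (if c = s then Some u else None)" "ann s 0 [] = None"
  by (auto simp: ann_def)
lemma cre0: "cre s 0 v = Some (s # v)" by (simp add: cre_def)

lemma cre_end: "cre s (ns s w + 1) w = Some (w @ [s])" by (simp add: cre_def)

lemma spos_at: "spos s (a @ s # b) ! ns s a = length a"
  by (simp add: spos_append spos_Cons nth_append length_spos)

lemma ann_last: assumes "s \<notin> set b" shows "ann s (ns s (a @ s # b)) (a @ s # b) = Some (a @ b)"
proof -
  have n: "ns s (a @ s # b) = ns s a + 1" using ns_notin[OF assms] by simp
  show ?thesis unfolding n ann_def using spos_at[of s a b] by (simp add: Let_def)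
qed

lemma cre_mid: "cre s (ns s a + 1) (a @ s # b) = Some (a @ s # s # b)"
  unfolding cre_def using spos_at[of s a b] by (simp add: Let_def)

lemma ann_mid_last: assumes "1 \<le> i" "i < ns s w"
  shows "\<exists>w'. ann s i w = Some w' \<and> w' \<noteq> [] \<and> last w' = last w \<and> length w' < length w"
proof -
  define p where "p = spos s w ! (i - 1)"
  have ls: "length (spos s w) = ns s w" by (rule length_spos)
  have "p < spos s w ! (ns s w - 1)" unfolding p_def
    using sorted_wrt_nth_less[OF spos_sorted, of "i - 1" "ns s w - 1" s w] assms ls by simp
  moreover have "spos s w ! (ns s w - 1) < length w"
    using spos_less[of "spos s w ! (ns s w - 1)" s w] ls assms by simp
  ultimately have pl: "Suc p < length w" by simp
  have "ann s i w = Some (take p w @ drop (Suc p) w)" using assms unfolding ann_def p_def by (simp add: Let_def)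
  moreover have "drop (Suc p) w \<noteq> []" using pl by simp
  moreover have "last (drop (Suc p) w) = last w" using pl by (simp add: last_drop)
  moreover have "length (take p w @ drop (Suc p) w) < length w" using pl by simp
  ultimately show ?thesis by auto
qed

lemma letter_other: "c \<noteq> Y \<Longrightarrow> c = X" "c \<noteq> X \<Longrightarrow> c = Y" by (cases c; simp)+

lemma P1: "pairing (X # u) (X # v) = pairing u v"
  by (simp add: pairing_def spos_Cons list_all2_map1 list_all2_map2)
lemma P2: "pairing (Y # u) (Y # v) = pairing u v"
  by (simp add: pairing_def spos_Cons list_all2_map1 list_all2_map2)
lemma P3: "pairing (Y # u) (X # v) = 0"
  by (auto simp: pairing_def spos_Cons list_all2_Cons2 length_spos[symmetric])

lemma P4: assumes "X \<notin> set b" "length (a @ X # b) = length (v @ [X])"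
  shows "pairing (a @ X # b) (v @ [X]) = pairing (a @ b) v"
proof -
  have sb: "spos X b = []" using spos_nothere[OF assms(1)] .
  have e1: "spos X (a @ X # b) = spos X a @ [length a]" by (simp add: spos_append spos_Cons sb)
  have e2: "spos X (a @ b) = spos X a" by (simp add: spos_append sb)
  have la: "length a \<le> length v" using assms(2) by simp
  have "list_all2 (\<le>) (spos X a @ [length a]) (spos X v @ [length v]) = list_all2 (\<le>) (spos X a) (spos X v)"
  proof (cases "length (spos X a) = length (spos X v)")
    case True then show ?thesis using la by (simp add: list_all2_append)
  next
    case False then show ?thesis using list_all2_lengthD by fastforce
  qed
  thus ?thesis unfolding pairing_def e1 e2 spos_snoc using ns_notin[OF assms(1)] by simp
qed

lemma sorted_bound: "sorted_wrt (<) s \<Longrightarrow> \<forall>x\<in>set s. x < (L::nat) \<Longrightarrow> j < length s \<Longrightarrow> s ! j + (length s - j) \<le> L"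
proof (induction s arbitrary: j)
  case Nil then show ?case by simp
next
  case (Cons x s)
  show ?case
  proof (cases j)
    case 0
    show ?thesis
    proof (cases s)
      case Nil then show ?thesis using Cons 0 by simp
    next
      case (Cons y s')
      have "s ! 0 + length s \<le> L" using Cons.IH[of 0] Cons.prems Cons by simp
      moreover have "x < s ! 0" using Cons.prems(1) Cons by simp
      ultimately show ?thesis using 0 by simp
    qed
  next
    case (Suc k)
    then show ?thesis using Cons.IH[of k] Cons.prems by simp
  qed
qed

lemma P5: assumes "Y \<notin> set b" "length (u @ [Y]) = length (a @ Y # b)"
  shows "pairing (u @ [Y]) (a @ Y # b) = pairing u (a @ b)"
proof (cases "ns X u = ns X (a @ b)")
  case False then show ?thesis by (simp add: pairing_def)
next
  case True
  have bX: "set b \<subseteq> {X}" using assms(1) letter_other by auto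
  have sb: "spos X b = [0..<length b]" using spos_all[OF bX] .
  have nb: "ns X b = length b" using sb length_spos[of X b] by simp
  define su where "su = spos X u"
  define m where "m = length (spos X a)"
  have lsu: "length su = m + length b" using True nb unfolding su_def m_def by (simp add: length_spos)
  have Lu: "length u = length a + length b" using assms(2) by simp
  have bnd: "\<forall>j<length b. drop m su ! j \<le> j + length a"
  proof (intro allI impI)
    fix j assume j: "j < length b"
    have "su ! (m + j) + (length su - (m + j)) \<le> length u"
      by (rule sorted_bound) (use spos_sorted spos_less j lsu in \<open>auto simp: su_def\<close>)
    thus "drop m su ! j \<le> j + length a" using lsu Lu j by simp
  qed
  have A: "list_all2 (\<le>) su (spos X a @ map (\<lambda>j. j + c) [0..<length b]) =
      (list_all2 (\<le>) (take m su) (spos X a) \<and> list_all2 (\<le>) (drop m su) (map (\<lambda>j. j + c) [0..<length b]))" for c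
  proof -
    have "list_all2 (\<le>) (take m su @ drop m su) (spos X a @ map (\<lambda>j. j + c) [0..<length b]) =
      (list_all2 (\<le>) (take m su) (spos X a) \<and> list_all2 (\<le>) (drop m su) (map (\<lambda>j. j + c) [0..<length b]))"
      by (rule list_all2_append) (use lsu in \<open>simp add: m_def\<close>)
    then show ?thesis by simp
  qed
  have B: "\<And>c. c \<ge> length a \<Longrightarrow> list_all2 (\<le>) (drop m su) (map (\<lambda>j. j + c) [0..<length b])"
    using bnd lsu by (auto simp: list_all2_conv_all_nth)
  have e1: "spos X (a @ Y # b) = spos X a @ map (\<lambda>j. j + (length a + 1)) [0..<length b]"
    by (simp add: spos_append spos_Cons sb comp_def add.assoc)
  have e2: "spos X (a @ b) = spos X a @ map (\<lambda>j. j + length a) [0..<length b]"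
    by (simp add: spos_append sb)
  have C1: "list_all2 (\<le>) (spos X u) (spos X (a @ Y # b)) = list_all2 (\<le>) (take m su) (spos X a)"
    unfolding e1 using A[of "length a + 1"] B[of "length a + 1"] su_def by simp
  have C2: "list_all2 (\<le>) (spos X u) (spos X (a @ b)) = list_all2 (\<le>) (take m su) (spos X a)"
    unfolding e2 using A[of "length a"] B[of "length a"] su_def by simp
  show ?thesis unfolding pairing_def spos_snoc using C1 C2 by simp
qed

lemma P6: assumes "w0 \<noteq> []" "last w0 = X" "w1 \<noteq> []" "last w1 = Y" shows "pairing w0 w1 = 0"
proof -
  obtain u where u: "w0 = u @ [X]" using assms(1,2) by (metis append_butlast_last_id)
  obtain v where v: "w1 = v @ [Y]" using assms(3,4) by (metis append_butlast_last_id)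
  have "\<not> list_all2 (\<le>) (spos X u @ [length u]) (spos X v)" if "length u = length v"
  proof
    assume h: "list_all2 (\<le>) (spos X u @ [length u]) (spos X v)"
    have ln: "length (spos X v) = Suc (length (spos X u))" using list_all2_lengthD[OF h] by simp
    then have ne: "spos X v \<noteq> []" by auto
    then have "last (spos X v) < length v" using spos_less last_in_set by blast
    moreover have "length u \<le> last (spos X v)"
    proof -
      have eq: "spos X v = butlast (spos X v) @ [last (spos X v)]" using ne by simp
      have lb: "length (spos X u) = length (butlast (spos X v))" using ln by simp
      have "list_all2 (\<le>) (spos X u @ [length u]) (butlast (spos X v) @ [last (spos X v)])"
        using h eq by metis
      then show ?thesis using list_all2_append[OF lb] by simp
    qed
    ultimately show False using that by simp
  qed
  moreover have "length u = length v" if "ns X w0 = ns X w1" "ns Y w0 = ns Y w1"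
    using that len_ns[of u] len_ns[of v] u v by simp
  ultimately show ?thesis unfolding pairing_def u v spos_snoc by auto
qed


lemma cnt: assumes "s \<noteq> t" shows "w \<noteq> [] \<Longrightarrow> last w \<noteq> s \<Longrightarrow> \<not>(\<exists>a b. w = a @ s # s # b) \<Longrightarrow>
   ns s w \<le> ns t w \<and> (hd w \<noteq> s \<longrightarrow> ns s w < ns t w)"
proof (induction w)
  case Nil then show ?case by simp
next
  case (Cons c v)
  have ct: "c \<noteq> s \<Longrightarrow> c = t" using assms by (cases c; cases s; cases t) auto
  show ?case
  proof (cases v)
    case Nil then show ?thesis using Cons.prems ct by auto
  next
    case (Cons d v')
    have nv: "v \<noteq> []" "last v \<noteq> s" using Cons Cons.prems by auto
    have nss: "\<not>(\<exists>a b. v = a @ s # s # b)"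
    proof
      assume "\<exists>a b. v = a @ s # s # b"
      then obtain a b where "v = a @ s # s # b" by blast
      then have "c # v = (c # a) @ s # s # b" by simp
      then show False using Cons.prems(3) by blast
    qed
    note IH = Cons.IH[OF nv nss]
    show ?thesis
    proof (cases "c = s")
      case True
      have "hd v \<noteq> s"
      proof
        assume "hd v = s"
        then have "c # v = [] @ s # s # v'" using True Cons by simp
        then show False using Cons.prems(3) by blast
      qed
      then show ?thesis using IH True assms by auto
    next
      case False
      then show ?thesis using IH ct assms by auto
    qed
  qed
qed

lemma liftB_simps[simp]: "liftB B (Some a) (Some b) = B a b" "liftB B None y = 0" "liftB B x None = 0"
  by (auto simp: liftB_def split: option.splits)

theorem mainTheorem7:
  fixes B :: "word \<Rightarrow> word \<Rightarrow> int"
  assumes grading: "\<And>w0 w1. (deg_n w0, deg_e w0) \<noteq> (deg_n w1, deg_e w1) \<Longrightarrow> B w0 w1 = 0"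
    and adj_x: "\<And>w0 w1 i. i \<le> ns X w0 \<Longrightarrow>
                 liftB B (ann X i w0) (Some w1) = liftB B (Some w0) (cre X i w1)"
    and adj_y: "\<And>w0 w1 i. i \<le> ns Y w1 \<Longrightarrow>
                 liftB B (Some w0) (ann Y i w1) = liftB B (cre Y i w0) (Some w1)"
    and norm: "B [] [] = 1"
  shows "B = pairing"
proof -
  have "B w0 w1 = pairing w0 w1" for w0 w1
  proof (induction "length w0 + length w1" arbitrary: w0 w1 rule: less_induct)
    case less
    show ?case
    proof (cases "ns X w0 = ns X w1 \<and> ns Y w0 = ns Y w1")
      case False
      then have "(deg_n w0, deg_e w0) \<noteq> (deg_n w1, deg_e w1)" unfolding deg_n_def deg_e_def by auto
      then have "B w0 w1 = 0" by (rule grading)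
      then show ?thesis using False unfolding pairing_def by auto
    next
      case True
      then have leq: "length w0 = length w1" using len_ns[of w0] len_ns[of w1] by simp
      show ?thesis
      proof (cases w0)
        case Nil
        then show ?thesis using leq norm by (simp add: pairing_def)
      next
        case (Cons c0 u)
        then obtain c1 v where w1: "w1 = c1 # v" using leq by (cases w1) auto
        note w0 = Cons
        show ?thesis
        proof (cases c1)
          case X
          have e: "liftB B (ann X 0 w0) (Some v) = B w0 w1" using adj_x[of 0 w0 v] X w1 by (simp add: cre0)
          show ?thesis
          proof (cases c0)
            case X
            then show ?thesis using e less[of u v] w0 w1 \<open>c1 = X\<close> by (simp add: ann0 P1)
          next
            case Y
            then show ?thesis using e w0 w1 \<open>c1 = X\<close> by (simp add: ann0 P3)
          qed
        next
          case Y
          note c1Y = this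
          show ?thesis
          proof (cases c0)
            case Y
            have "B u v = B w0 w1" using adj_y[of 0 w1 u] Y c1Y w0 w1 by (simp add: cre0 ann0)
            then show ?thesis using less[of u v] w0 w1 Y c1Y by (simp add: P2)
          next
            case X
            note c0X = this
            show ?thesis
            proof (cases "last w1 = X")
              case True
              obtain v' where v': "w1 = v' @ [X]" using True w1 by (metis append_butlast_last_id list.distinct(1))
              have "X \<in> set w0" using w0 c0X by simp
              then obtain a b where ab: "w0 = a @ X # b" "X \<notin> set b" using split_list_last by metis
              have n: "ns X w0 = ns X v' + 1" using True \<open>ns X w0 = ns X w1 \<and> ns Y w0 = ns Y w1\<close> v' by simp
              have "B (a @ b) v' = B w0 w1"
                using adj_x[of "ns X w0" w0 v'] ann_last[OF ab(2), of a] ab(1) v' n cre_end[of X v'] by simp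
              moreover have "B (a @ b) v' = pairing (a @ b) v'" by (rule less) (use ab v' in simp)
              moreover have "pairing w0 w1 = pairing (a @ b) v'" using P4[OF ab(2), of a v'] ab v' leq by simp
              ultimately show ?thesis by simp
            next
              case False
              then have l1: "last w1 = Y" using letter_other by blast
              show ?thesis
              proof (cases "last w0 = Y")
                case True
                obtain u' where u': "w0 = u' @ [Y]" using True w0 by (metis append_butlast_last_id list.distinct(1))
                have "Y \<in> set w1" using w1 c1Y by simp
                then obtain a b where ab: "w1 = a @ Y # b" "Y \<notin> set b" using split_list_last by metis
                have n: "ns Y w1 = ns Y u' + 1" using \<open>ns X w0 = ns X w1 \<and> ns Y w0 = ns Y w1\<close> u' by simp
                have "B u' (a @ b) = B w0 w1"
                  using adj_y[of "ns Y w1" w1 u'] ann_last[OF ab(2), of a] ab(1) u' n cre_end[of Y u'] by simp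
                moreover have "B u' (a @ b) = pairing u' (a @ b)" by (rule less) (use ab u' in simp)
                moreover have "pairing w0 w1 = pairing u' (a @ b)" using P5[OF ab(2), of u' a] ab u' leq by simp
                ultimately show ?thesis by simp
              next
                case False
                then have l0: "last w0 = X" using letter_other by blast
                have p0: "pairing w0 w1 = 0" using P6 l0 l1 w0 w1 by simp
                show ?thesis
                proof (cases "\<exists>a b. w1 = a @ X # X # b")
                  case True
                  then obtain a b where ab: "w1 = a @ X # X # b" by blast
                  have i1: "ns X a + 1 < ns X w0" using ab \<open>ns X w0 = ns X w1 \<and> ns Y w0 = ns Y w1\<close> by simp
                  obtain w' where w': "ann X (ns X a + 1) w0 = Some w'" "w' \<noteq> []" "last w' = last w0" "length w' < length w0"
                    using ann_mid_last[of "ns X a + 1" X w0] i1 by auto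
                  have "B w' (a @ X # b) = B w0 w1" using adj_x[of "ns X a + 1" w0 "a @ X # b"] i1 w' ab cre_mid[of X a b]
                    by simp
                  moreover have "B w' (a @ X # b) = pairing w' (a @ X # b)" by (rule less) (use w' ab in simp)
                  moreover have "last (a @ X # b) = Y" using l1 ab by (cases b) auto
                  ultimately show ?thesis using P6[of w' "a @ X # b"] w' l0 p0 by simp
                next
                  case noXX: False
                  show ?thesis
                  proof (cases "\<exists>a b. w0 = a @ Y # Y # b")
                    case True
                    then obtain a b where ab: "w0 = a @ Y # Y # b" by blast
                    have i1: "ns Y a + 1 < ns Y w1" using ab \<open>ns X w0 = ns X w1 \<and> ns Y w0 = ns Y w1\<close> by simp
                    obtain w' where w': "ann Y (ns Y a + 1) w1 = Some w'" "w' \<noteq> []" "last w' = last w1" "length w' < length w1"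
                      using ann_mid_last[of "ns Y a + 1" Y w1] i1 by auto
                    have "B (a @ Y # b) w' = B w0 w1" using adj_y[of "ns Y a + 1" w1 "a @ Y # b"] i1 w' ab cre_mid[of Y a b]
                      by simp
                    moreover have "B (a @ Y # b) w' = pairing (a @ Y # b) w'" by (rule less) (use w' ab in simp)
                    moreover have "last (a @ Y # b) = X" using l0 ab by (cases b) auto
                    ultimately show ?thesis using P6[of "a @ Y # b" w'] w' l1 p0 by simp
                  next
                    case noYY: False
                    have "ns X w1 < ns Y w1" using cnt[of X Y w1] noXX l1 w1 c1Y by simp
                    moreover have "ns Y w0 < ns X w0" using cnt[of Y X w0] noYY l0 w0 c0X by simp
                    ultimately show ?thesis using True by simp
                  qed
                qed
              qed
            qed
          qed
        qed
      qed
    qed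
  qed
  then show ?thesis by blast
qed

end
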